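(* Let $m,n,k$ be positive integers. Then \begin{align*} |\mathrm{WHom}(P_m,P_{n}\square P_{k})|=&\,4\sum_{i=0}^{\lfloor n/2\rfloor-1}\sum_{j=0}^{\lfloor k/2\rfloor-1}|\mathrm{WHom}^{ij}(P_m,P_{n}\square P_{k})| +(1-(-1)^n)\sum_{j=0}^{\lfloor k/2\rfloor-1}|\mathrm{WHom}^{\lfloor n/2\rfloor j}(P_m,P_{n}\square P_{k})|\\ &+(1-(-1)^k)\sum_{i=0}^{\lfloor n/2\rfloor-1}|\mathrm{WHom}^{i\lfloor k/2\rfloor}(P_m,P_{n}\square P_{k})| +\tfrac14(1-(-1)^n)(1-(-1)^k)\,|\mathrm{WHom}^{\lfloor n/2\rfloor\lfloor k/2\rfloor}(P_m,P_{n}\square P_{k})|, \end{align*} where, for $0\le i\le n-1$ and $0\le j\le k-1$, $$|\mathrm{WHom}^{ij}(P_m,P_n\square P_k)|=\sum_{h=0}^{m-1}\binom{m-1}{h}\,|\mathrm{Hom}^i(P_{h+1},P_n)|\,|\mathrm{WHom}^j(P_{m-h},P_k)|.$$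
   Context: For a positive integer $n$, $P_n$ denotes the path with vertex set $\{0,1,\dots,n-1\}$ and edge set $\{\{i,i+1\} : i=0,\dots,n-2\}$. The Cartesian product $P_n\square P_k$ has vertex set $\{0,\dots,n-1\}\times\{0,\dots,k-1\}$, with $\{(a,u),(b,v)\}$ an edge iff either $a=b$ and $\{u,v\}\in E(P_k)$, or $\{a,b\}\in E(P_n)$ and $u=v$. A homomorphism $f:G\to H$ is a map $V(G)\to V(H)$ with $\{f(x),f(y)\}\in E(H)$ for all $\{x,y\}\in E(G)$; a weak homomorphism is a map with $f(x)=f(y)$ or $\{f(x),f(y)\}\in E(H)$ for all $\{x,y\}\in E(G)$. $\mathrm{WHom}(G,H)$ is the set of weak homomorphisms from $G$ to $H$. $\mathrm{Hom}^i(P_a,P_n)$ is the set of homomorphisms $f:P_a\to P_n$ with $f(0)=i$; $\mathrm{WHom}^j(P_a,P_k)$ is the set of weak homomorphisms $f:P_a\to P_k$ with $f(0)=j$; $\mathrm{WHom}^{ij}(P_m,P_n\square P_k)$ is the set of weak homomorphisms $f:P_m\to P_n\square P_k$ with $f(0)=(i,j)$. *)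

theory Defs
  imports Complex_Main "HOL-Library.FuncSet"
begin

text \<open>A (simple) graph is represented as a pair (vertex set, symmetric adjacency relation).
Maps V(G) -> V(H) are represented as extensional functions in PiE (fst G) (\<lambda>_. fst H).\<close>

type_synonym 'a graph = "'a set \<times> ('a \<Rightarrow> 'a \<Rightarrow> bool)"

definition Path :: "nat \<Rightarrow> nat graph" where
  "Path n = ({0..<n}, \<lambda>u v. u < n \<and> v < n \<and> (v = u + 1 \<or> u = v + 1))"

definition box :: "'a graph \<Rightarrow> 'b graph \<Rightarrow> ('a \<times> 'b) graph" where
  "box G H = (fst G \<times> fst H,
     \<lambda>(a, u) (b, v). (a = b \<and> a \<in> fst G \<and> snd H u v) \<or> (u = v \<and> u \<in> fst H \<and> snd G a b))"

definition Hom :: "'a graph \<Rightarrow> 'b graph \<Rightarrow> ('a \<Rightarrow> 'b) set" where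
  "Hom G H = {f \<in> fst G \<rightarrow>\<^sub>E fst H. \<forall>x y. snd G x y \<longrightarrow> snd H (f x) (f y)}"

definition WHom :: "'a graph \<Rightarrow> 'b graph \<Rightarrow> ('a \<Rightarrow> 'b) set" where
  "WHom G H = {f \<in> fst G \<rightarrow>\<^sub>E fst H. \<forall>x y. snd G x y \<longrightarrow> f x = f y \<or> snd H (f x) (f y)}"

definition HomP :: "nat \<Rightarrow> nat \<Rightarrow> nat \<Rightarrow> (nat \<Rightarrow> nat) set" where
  "HomP i a n = {f \<in> Hom (Path a) (Path n). f 0 = i}"

definition WHomP :: "nat \<Rightarrow> nat \<Rightarrow> nat \<Rightarrow> (nat \<Rightarrow> nat) set" where
  "WHomP j a k = {f \<in> WHom (Path a) (Path k). f 0 = j}"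

definition WHomPP :: "nat \<Rightarrow> nat \<Rightarrow> nat \<Rightarrow> nat \<Rightarrow> nat \<Rightarrow> (nat \<Rightarrow> nat \<times> nat) set" where
  "WHomPP i j m n k = {f \<in> WHom (Path m) (box (Path n) (Path k)). f 0 = (i, j)}"

end

theory Submission
  imports Defs
begin

definition walks :: "'a set \<Rightarrow> ('a \<Rightarrow> 'a \<Rightarrow> bool) \<Rightarrow> nat \<Rightarrow> 'a \<Rightarrow> (nat \<Rightarrow> 'a) set" where
  "walks V R a v = {f \<in> {0..<Suc a} \<rightarrow>\<^sub>E V. f 0 = v \<and> (\<forall>x<a. R (f x) (f (Suc x)))}"

lemma walks_finite: "finite V \<Longrightarrow> finite (walks V R a v)"
  unfolding walks_def by (rule finite_subset[of _ "{0..<Suc a} \<rightarrow>\<^sub>E V"]) (auto intro: finite_PiE)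

lemma walks_0: "card (walks V R 0 v) = (if v \<in> V then 1 else 0)"
proof -
  have "walks V R 0 v = (if v \<in> V then {\<lambda>x. if x = 0 then v else undefined} else {})"
    unfolding walks_def by (auto simp: PiE_def extensional_def fun_eq_iff)
  then show ?thesis by simp
qed

lemma walks_rec:
  assumes "finite V"
  shows "card (walks V R (Suc a) v) = (if v \<in> V then (\<Sum>w\<in>{w\<in>V. R v w}. card (walks V R a w)) else 0)"
proof (cases "v \<in> V")
  case False
  then have "walks V R (Suc a) v = {}" unfolding walks_def by auto
  then show ?thesis using False by simp
next
  case True
  define \<phi> where "\<phi> = (\<lambda>f::nat\<Rightarrow>'a. (f 1, \<lambda>x. if x < Suc a then f (Suc x) else undefined))"
  define \<psi> where "\<psi> = (\<lambda>(w::'a, g::nat\<Rightarrow>'a). \<lambda>x. if x = 0 then v else if x < Suc (Suc a) then g (x - 1) else undefined)"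
  have "bij_betw \<phi> (walks V R (Suc a) v) (SIGMA w:{w\<in>V. R v w}. walks V R a w)"
  proof (rule bij_betw_byWitness[where f'=\<psi>])
    show "\<forall>f\<in>walks V R (Suc a) v. \<psi> (\<phi> f) = f"
      unfolding walks_def \<phi>_def \<psi>_def
      by (auto simp: fun_eq_iff PiE_def extensional_def)
    show "\<forall>p\<in>(SIGMA w:{w\<in>V. R v w}. walks V R a w). \<phi> (\<psi> p) = p"
      unfolding walks_def \<phi>_def \<psi>_def
      by (auto simp: fun_eq_iff PiE_def extensional_def)
    show "\<phi> ` walks V R (Suc a) v \<subseteq> (SIGMA w:{w\<in>V. R v w}. walks V R a w)"
      unfolding walks_def \<phi>_def by (auto simp: PiE_def extensional_def)
    show "\<psi> ` (SIGMA w:{w\<in>V. R v w}. walks V R a w) \<subseteq> walks V R (Suc a) v"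
      unfolding walks_def \<psi>_def using True apply (auto simp: PiE_def extensional_def)
      apply (rename_tac b x, case_tac x) by auto
  qed
  then have "card (walks V R (Suc a) v) = card (SIGMA w:{w\<in>V. R v w}. walks V R a w)"
    by (rule bij_betw_same_card)
  also have "\<dots> = (\<Sum>w\<in>{w\<in>V. R v w}. card (walks V R a w))"
    using assms by (simp add: walks_finite)
  finally show ?thesis using True by simp
qed

lemma half_sum:
  fixes g :: "nat \<Rightarrow> real"
  assumes "\<forall>i<n. g (n - 1 - i) = g i"
  shows "(\<Sum>i=0..<n. g i) = 2 * (\<Sum>i=0..<n div 2. g i) + (1 - (-1)^n)/2 * g (n div 2)"
proof -
  define q where "q = n div 2"
  define r where "r = n mod 2"
  have n: "n = q + r + q" unfolding q_def r_def by presburger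
  have tail: "(\<Sum>i=q+r..<n. g i) = (\<Sum>i=0..<q. g i)"
  proof -
    have "(\<Sum>i=q+r..<n. g i) = (\<Sum>i=0..<q. g (i + (q+r)))"
      using sum.shift_bounds_nat_ivl[of g 0 "q+r" q] n by (simp add: add.commute)
    also have "\<dots> = (\<Sum>i=0..<q. g (q - Suc i))"
    proof (rule sum.cong)
      fix i assume "i \<in> {0..<q}"
      then have "i < q" by simp
      have "i + (q+r) < n" using n \<open>i<q\<close> by simp
      then have "g (n - 1 - (i + (q+r))) = g (i + (q+r))" using assms by blast
      moreover have "n - 1 - (i + (q+r)) = q - Suc i" using n \<open>i<q\<close> by simp
      ultimately show "g (i + (q+r)) = g (q - Suc i)" by simp
    qed (rule refl)
    also have "\<dots> = (\<Sum>i<q. g i)" unfolding atLeast0LessThan by (rule sum.nat_diff_reindex)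
    finally show ?thesis by (simp add: atLeast0LessThan)
  qed
  have mid: "(\<Sum>i=q..<q+r. g i) = (1 - (-1)^n)/2 * g q"
  proof (cases "even n")
    case True
    then have "r = 0" unfolding r_def by simp
    then show ?thesis using True by simp
  next
    case False
    then have "r = 1" unfolding r_def by (simp add: odd_iff_mod_2_eq_one)
    then show ?thesis using False by simp
  qed
  have "(\<Sum>i=0..<n. g i) = (\<Sum>i=0..<q. g i) + (\<Sum>i=q..<q+r. g i) + (\<Sum>i=q+r..<n. g i)"
    using n by (metis sum.atLeastLessThan_concat le_add1 le_add2 zero_le)
  then show ?thesis using tail mid unfolding q_def by simp
qed

lemma walks_sym:
  assumes inv: "\<forall>x\<in>V. \<sigma> x \<in> V \<and> \<sigma> (\<sigma> x) = x"
    and pres: "\<forall>x\<in>V. \<forall>y\<in>V. R x y \<longrightarrow> R (\<sigma> x) (\<sigma> y)"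
    and v: "v \<in> V"
  shows "card (walks V R a (\<sigma> v)) = card (walks V R a v)"
proof -
  define T where "T = (\<lambda>f::nat\<Rightarrow>'a. \<lambda>x. if x < Suc a then \<sigma> (f x) else undefined)"
  have "bij_betw T (walks V R a v) (walks V R a (\<sigma> v))"
  proof (rule bij_betw_byWitness[where f'=T])
    show "\<forall>f\<in>walks V R a v. T (T f) = f"
      unfolding walks_def T_def using inv by (auto simp: fun_eq_iff PiE_def extensional_def Pi_def)
    show "\<forall>f\<in>walks V R a (\<sigma> v). T (T f) = f"
      unfolding walks_def T_def using inv by (auto simp: fun_eq_iff PiE_def extensional_def Pi_def)
    show "T ` walks V R a v \<subseteq> walks V R a (\<sigma> v)"
      unfolding walks_def T_def using inv pres by (auto simp: PiE_def extensional_def Pi_def)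
    show "T ` walks V R a (\<sigma> v) \<subseteq> walks V R a v"
      unfolding walks_def T_def using inv pres v by (auto simp: PiE_def extensional_def Pi_def)
  qed
  then show ?thesis by (simp add: bij_betw_same_card)
qed

lemma edge_cond:
  assumes "\<forall>x y. R x y \<longrightarrow> R y x"
  shows "(\<forall>x y. snd (Path (Suc a)) x y \<longrightarrow> R (f x) (f y)) \<longleftrightarrow> (\<forall>x<a. R (f x) (f (Suc x)))"
  using assms unfolding Path_def by auto

lemma fst_Path[simp]: "fst (Path n) = {0..<n}" by (simp add: Path_def)

lemma HomP_walks: "HomP i (Suc a) n = walks {0..<n} (snd (Path n)) a i"
proof -
  have s: "\<forall>x y. snd (Path n) x y \<longrightarrow> snd (Path n) y x" unfolding Path_def by auto
  show ?thesis unfolding HomP_def Hom_def walks_def using edge_cond[OF s, of a]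
    by auto
qed

lemma binom_step:
  fixes H V :: "nat \<Rightarrow> nat \<Rightarrow> nat"
  assumes hH: "\<And>h. H (Suc h) i = (\<Sum>i'\<in>A. H h i')"
    and hV: "\<And>t. V (Suc t) j = V t j + (\<Sum>j'\<in>B. V t j')"
  shows "(\<Sum>h\<le>Suc M. (Suc M choose h) * H h i * V (Suc M - h) j) =
     (\<Sum>h\<le>M. (M choose h) * H h i * V (M-h) j)
   + (\<Sum>i'\<in>A. \<Sum>h\<le>M. (M choose h) * H h i' * V (M-h) j)
   + (\<Sum>j'\<in>B. \<Sum>h\<le>M. (M choose h) * H h i * V (M-h) j')"
proof -
  define S1 where "S1 = (\<Sum>h\<le>M. (M choose h) * H h i * V (Suc M - h) j)"
  define S2 where "S2 = (\<Sum>h\<le>M. (M choose h) * H (Suc h) i * V (M-h) j)"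
  define S3 where "S3 = (\<Sum>h\<le>M. (M choose Suc h) * H (Suc h) i * V (M-h) j)"
  have L: "(\<Sum>h\<le>Suc M. (Suc M choose h) * H h i * V (Suc M - h) j) = H 0 i * V (Suc M) j + S2 + S3"
    unfolding S2_def S3_def
    by (simp add: sum.atMost_Suc_shift sum.distrib algebra_simps del: sum.atMost_Suc)
  have S1': "S1 = H 0 i * V (Suc M) j + S3"
  proof -
    have "S1 = (\<Sum>h\<le>Suc M. (M choose h) * H h i * V (Suc M - h) j)"
      unfolding S1_def by simp
    also have "\<dots> = H 0 i * V (Suc M) j + S3"
      unfolding S3_def by (simp add: sum.atMost_Suc_shift del: sum.atMost_Suc)
    finally show ?thesis .
  qed
  have S2': "S2 = (\<Sum>i'\<in>A. \<Sum>h\<le>M. (M choose h) * H h i' * V (M-h) j)"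
  proof -
    have "S2 = (\<Sum>h\<le>M. \<Sum>i'\<in>A. (M choose h) * H h i' * V (M-h) j)"
      unfolding S2_def hH by (simp add: sum_distrib_left sum_distrib_right)
    then show ?thesis by (simp add: sum.swap[of _ A])
  qed
  have S1'': "S1 = (\<Sum>h\<le>M. (M choose h) * H h i * V (M-h) j)
       + (\<Sum>j'\<in>B. \<Sum>h\<le>M. (M choose h) * H h i * V (M-h) j')"
  proof -
    have "S1 = (\<Sum>h\<le>M. (M choose h) * H h i * (V (M-h) j + (\<Sum>j'\<in>B. V (M-h) j')))"
      unfolding S1_def by (rule sum.cong) (auto simp: Suc_diff_le hV)
    also have "\<dots> = (\<Sum>h\<le>M. (M choose h) * H h i * V (M-h) j)
       + (\<Sum>h\<le>M. \<Sum>j'\<in>B. (M choose h) * H h i * V (M-h) j')"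
      by (simp add: sum.distrib algebra_simps sum_distrib_left)
    finally show ?thesis by (simp add: sum.swap[of _ B])
  qed
  show ?thesis using L S1' S2' S1'' by simp
qed

lemma WHomP_walks: "WHomP j (Suc a) k = walks {0..<k} (\<lambda>x y. x = y \<or> snd (Path k) x y) a j"
proof -
  have s: "\<forall>x y. (\<lambda>x y. x = y \<or> snd (Path k) x y) x y \<longrightarrow> (\<lambda>x y. x = y \<or> snd (Path k) x y) y x"
    unfolding Path_def by auto
  show ?thesis unfolding WHomP_def WHom_def walks_def using edge_cond[OF s, of a]
    by auto
qed

lemma fst_box[simp]: "fst (box G H) = fst G \<times> fst H" by (simp add: box_def)

definition RB :: "nat \<Rightarrow> nat \<Rightarrow> nat \<times> nat \<Rightarrow> nat \<times> nat \<Rightarrow> bool" where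
  "RB n k = (\<lambda>p q. p = q \<or> snd (box (Path n) (Path k)) p q)"

lemma WHomPP_walks: "WHomPP i j (Suc a) n k = walks ({0..<n} \<times> {0..<k}) (RB n k) a (i, j)"
proof -
  have s: "\<forall>x y. RB n k x y \<longrightarrow> RB n k y x"
    unfolding RB_def box_def Path_def by auto
  show ?thesis unfolding WHomPP_def WHom_def walks_def using edge_cond[OF s, of a]
    by (auto simp: RB_def)
qed

definition Nb :: "nat \<Rightarrow> nat \<Rightarrow> nat set" where
  "Nb n i = {w \<in> {0..<n}. snd (Path n) i w}"

definition Hn where "Hn n a i = card (walks {0..<n} (snd (Path n)) a i)"
definition Vk where "Vk k a j = card (walks {0..<k} (\<lambda>x y. x = y \<or> snd (Path k) x y) a j)"
definition Wb where "Wb n k a i j = card (walks ({0..<n} \<times> {0..<k}) (RB n k) a (i, j))"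

lemma Hn_rec: "i < n \<Longrightarrow> Hn n (Suc a) i = (\<Sum>i'\<in>Nb n i. Hn n a i')"
  unfolding Hn_def Nb_def by (subst walks_rec) auto

lemma Nb_irrefl: "j \<notin> Nb k j" unfolding Nb_def Path_def by auto

lemma Vk_rec: "j < k \<Longrightarrow> Vk k (Suc a) j = Vk k a j + (\<Sum>j'\<in>Nb k j. Vk k a j')"
proof -
  assume j: "j < k"
  have e: "{w \<in> {0..<k}. j = w \<or> snd (Path k) j w} = insert j (Nb k j)"
    using j unfolding Nb_def by auto
  show ?thesis unfolding Vk_def
    apply (subst walks_rec, simp)
    using j e Nb_irrefl[of j k] finite_subset[of "Nb k j" "{0..<k}"] by (simp add: Nb_def[symmetric] sum.insert, auto simp: Nb_def)
qed

lemma Wb_rec: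
  assumes "i < n" "j < k"
  shows "Wb n k (Suc a) i j = Wb n k a i j + (\<Sum>i'\<in>Nb n i. Wb n k a i' j) + (\<Sum>j'\<in>Nb k j. Wb n k a i j')"
proof -
  define w where "w = (\<lambda>p. card (walks ({0..<n} \<times> {0..<k}) (RB n k) a p))"
  have e: "{p \<in> {0..<n} \<times> {0..<k}. RB n k (i, j) p} =
      insert (i, j) ((\<lambda>i'. (i', j)) ` Nb n i \<union> (\<lambda>j'. (i, j')) ` Nb k j)"
    using assms unfolding RB_def Nb_def box_def by auto
  have fin: "finite (Nb n i)" "finite (Nb k j)" unfolding Nb_def by auto
  have d: "(\<lambda>i'. (i', j)) ` Nb n i \<inter> (\<lambda>j'. (i, j')) ` Nb k j = {}"
    using Nb_irrefl[of i n] Nb_irrefl[of j k] by auto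
  have nin: "(i, j) \<notin> (\<lambda>i'. (i', j)) ` Nb n i \<union> (\<lambda>j'. (i, j')) ` Nb k j"
    using Nb_irrefl[of i n] Nb_irrefl[of j k] by auto
  have "Wb n k (Suc a) i j = (\<Sum>p\<in>insert (i, j) ((\<lambda>i'. (i', j)) ` Nb n i \<union> (\<lambda>j'. (i, j')) ` Nb k j). w p)"
    unfolding Wb_def w_def using assms e by (subst walks_rec) auto
  also have "\<dots> = w (i, j) + (\<Sum>p\<in>(\<lambda>i'. (i', j)) ` Nb n i. w p) + (\<Sum>p\<in>(\<lambda>j'. (i, j')) ` Nb k j. w p)"
    using fin d nin by (simp add: sum.insert sum.union_disjoint)
  also have "\<dots> = w (i, j) + (\<Sum>i'\<in>Nb n i. w (i', j)) + (\<Sum>j'\<in>Nb k j. w (i, j'))"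
    by (simp add: sum.reindex inj_on_def)
  finally show ?thesis unfolding w_def Wb_def .
qed

lemma count_main:
  "\<forall>i<n. \<forall>j<k. Wb n k M i j = (\<Sum>h\<le>M. (M choose h) * Hn n h i * Vk k (M - h) j)"
proof (induction M)
  case 0
  then show ?case by (simp add: Wb_def Hn_def Vk_def walks_0)
next
  case (Suc M)
  show ?case
  proof (intro allI impI)
    fix i j assume i: "i < n" and j: "j < k"
    have sub: "\<And>i'. i' \<in> Nb n i \<Longrightarrow> i' < n" "\<And>j'. j' \<in> Nb k j \<Longrightarrow> j' < k" unfolding Nb_def by auto
    have "Wb n k (Suc M) i j = Wb n k M i j + (\<Sum>i'\<in>Nb n i. Wb n k M i' j) + (\<Sum>j'\<in>Nb k j. Wb n k M i j')"
      using Wb_rec[OF i j] .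
    also have "\<dots> = (\<Sum>h\<le>M. (M choose h) * Hn n h i * Vk k (M - h) j)
       + (\<Sum>i'\<in>Nb n i. \<Sum>h\<le>M. (M choose h) * Hn n h i' * Vk k (M - h) j)
       + (\<Sum>j'\<in>Nb k j. \<Sum>h\<le>M. (M choose h) * Hn n h i * Vk k (M - h) j')"
      using Suc.IH i j sub by (simp cong: sum.cong)
    also have "\<dots> = (\<Sum>h\<le>Suc M. (Suc M choose h) * Hn n h i * Vk k (Suc M - h) j)"
      by (rule binom_step[symmetric, where H="Hn n" and V="Vk k"]) (auto simp: Hn_rec[OF i] Vk_rec[OF j])
    finally show "Wb n k (Suc M) i j = (\<Sum>h\<le>Suc M. (Suc M choose h) * Hn n h i * Vk k (Suc M - h) j)" .
  qed
qed

lemma card_WHomPP: "card (WHomPP i j (Suc M) n k) = Wb n k M i j"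
  by (simp add: WHomPP_walks Wb_def)

lemma walks_empty: "v \<notin> V \<Longrightarrow> walks V R a v = {}"
proof -
  assume v: "v \<notin> V"
  { fix f assume "f \<in> walks V R a v"
    then have "f 0 \<in> V" "f 0 = v" unfolding walks_def by (auto intro: PiE_mem) }
  then show ?thesis using v by blast
qed

lemma Wb_sym1:
  assumes "i < n" shows "Wb n k M (n - Suc i) j = Wb n k M i j"
proof (cases "j < k")
  case True
  show ?thesis
    proof -
      have a1: "\<forall>x\<in>{0..<n} \<times> {0..<k}. (\<lambda>(a, b). (n - 1 - a, b)) x \<in> {0..<n} \<times> {0..<k} \<and> (\<lambda>(a, b). (n - 1 - a, b)) ((\<lambda>(a, b). (n - 1 - a, b)) x) = x"
        by auto
      have a2: "\<forall>x\<in>{0..<n} \<times> {0..<k}. \<forall>y\<in>{0..<n} \<times> {0..<k}. RB n k x y \<longrightarrow> RB n k ((\<lambda>(a, b). (n - 1 - a, b)) x) ((\<lambda>(a, b). (n - 1 - a, b)) y)"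
        unfolding RB_def box_def Path_def by auto
      show ?thesis using walks_sym[OF a1 a2, of "(i, j)" M] assms True by (simp add: Wb_def)
    qed
next
  case False
  then have "walks ({0..<n} \<times> {0..<k}) (RB n k) M (x, j) = {}" for x
    using False by (intro walks_empty) auto
  then show ?thesis unfolding Wb_def by simp
qed

lemma Wb_sym2:
  assumes "j < k" shows "Wb n k M i (k - Suc j) = Wb n k M i j"
proof (cases "i < n")
  case True
  show ?thesis
    proof -
      have a1: "\<forall>x\<in>{0..<n} \<times> {0..<k}. (\<lambda>(a, b). (a, k - 1 - b)) x \<in> {0..<n} \<times> {0..<k} \<and> (\<lambda>(a, b). (a, k - 1 - b)) ((\<lambda>(a, b). (a, k - 1 - b)) x) = x"
        by auto
      have a2: "\<forall>x\<in>{0..<n} \<times> {0..<k}. \<forall>y\<in>{0..<n} \<times> {0..<k}. RB n k x y \<longrightarrow> RB n k ((\<lambda>(a, b). (a, k - 1 - b)) x) ((\<lambda>(a, b). (a, k - 1 - b)) y)"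
        unfolding RB_def box_def Path_def by auto
      show ?thesis using walks_sym[OF a1 a2, of "(i, j)" M] assms True by (simp add: Wb_def)
    qed
next
  case False
  then have "walks ({0..<n} \<times> {0..<k}) (RB n k) M (i, x) = {}" for x
    using False by (intro walks_empty) auto
  then show ?thesis unfolding Wb_def by simp
qed

lemma WHom_union:
  assumes "0 < m"
  shows "WHom (Path m) (box (Path n) (Path k)) = (\<Union>p\<in>{0..<n} \<times> {0..<k}. WHomPP (fst p) (snd p) m n k)"
  using assms unfolding WHomPP_def by (auto simp: WHom_def PiE_def Pi_def)

lemma WHomPP_finite: "finite (WHomPP i j m n k)"
proof -
  have "WHomPP i j m n k \<subseteq> {0..<m} \<rightarrow>\<^sub>E {0..<n} \<times> {0..<k}"
    unfolding WHomPP_def WHom_def by auto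
  then show ?thesis by (rule finite_subset) (auto intro: finite_PiE)
qed

theorem theorem4:
  fixes m n k :: nat
  assumes "0 < m" and "0 < n" and "0 < k"
  shows "real (card (WHom (Path m) (box (Path n) (Path k)))) =
           4 * (\<Sum>i = 0..<n div 2. \<Sum>j = 0..<k div 2. real (card (WHomPP i j m n k)))
         + (1 - (-1) ^ n) * (\<Sum>j = 0..<k div 2. real (card (WHomPP (n div 2) j m n k)))
         + (1 - (-1) ^ k) * (\<Sum>i = 0..<n div 2. real (card (WHomPP i (k div 2) m n k)))
         + (1 / 4) * (1 - (-1) ^ n) * (1 - (-1) ^ k) * real (card (WHomPP (n div 2) (k div 2) m n k))
       \<and> (\<forall>i < n. \<forall>j < k. card (WHomPP i j m n k) =
           (\<Sum>h = 0..m - 1. (m - 1 choose h) * card (HomP i (h + 1) n) * card (WHomP j (m - h) k)))"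
proof
  obtain M where mM: "m = Suc M" using assms(1) gr0_implies_Suc by blast
  define w where "w i j = real (card (WHomPP i j m n k))" for i j
  have wW: "w i j = real (Wb n k M i j)" for i j unfolding w_def mM card_WHomPP ..
  have tot: "real (card (WHom (Path m) (box (Path n) (Path k)))) = (\<Sum>i=0..<n. \<Sum>j=0..<k. w i j)"
  proof -
    have "card (WHom (Path m) (box (Path n) (Path k))) = (\<Sum>p\<in>{0..<n} \<times> {0..<k}. card (WHomPP (fst p) (snd p) m n k))"
      unfolding WHom_union[OF assms(1)]
      apply (rule card_UN_disjoint)
        apply simp
       apply (simp add: WHomPP_finite)
      apply (auto simp: WHomPP_def)
      done
    also have "\<dots> = (\<Sum>i=0..<n. \<Sum>j=0..<k. card (WHomPP i j m n k))"
      by (simp add: sum.cartesian_product split_beta)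
    finally show ?thesis unfolding w_def by simp
  qed
  define G where "G i = (\<Sum>j=0..<k. w i j)" for i
  have Gs: "\<forall>i<n. G (n - 1 - i) = G i"
    unfolding G_def wW using Wb_sym1 by simp
  have Gh: "G i = 2 * (\<Sum>j=0..<k div 2. w i j) + (1 - (-1)^k)/2 * w i (k div 2)" for i
    unfolding G_def by (rule half_sum) (simp add: wW Wb_sym2)
  have "real (card (WHom (Path m) (box (Path n) (Path k)))) =
     2 * (\<Sum>i=0..<n div 2. G i) + (1 - (-1)^n)/2 * G (n div 2)"
    unfolding tot G_def[symmetric] by (rule half_sum[OF Gs])
  also have "\<dots> = 4 * (\<Sum>i = 0..<n div 2. \<Sum>j = 0..<k div 2. w i j)
         + (1 - (-1) ^ n) * (\<Sum>j = 0..<k div 2. w (n div 2) j)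
         + (1 - (-1) ^ k) * (\<Sum>i = 0..<n div 2. w i (k div 2))
         + (1 / 4) * (1 - (-1) ^ n) * (1 - (-1) ^ k) * w (n div 2) (k div 2)"
  proof -
    define cn :: real where "cn = (1 - (-1)^n)/2"
    define ck :: real where "ck = (1 - (-1)^k)/2"
    have en: "(1 - (-1)^n) = 2 * cn" and ek: "(1 - (-1)^k) = 2 * ck" unfolding cn_def ck_def by simp_all
    show ?thesis unfolding Gh en ek cn_def[symmetric] ck_def[symmetric]
      by (simp add: sum.distrib sum_distrib_left algebra_simps)
  qed
  finally show "real (card (WHom (Path m) (box (Path n) (Path k)))) =
           4 * (\<Sum>i = 0..<n div 2. \<Sum>j = 0..<k div 2. real (card (WHomPP i j m n k)))
         + (1 - (-1) ^ n) * (\<Sum>j = 0..<k div 2. real (card (WHomPP (n div 2) j m n k)))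
         + (1 - (-1) ^ k) * (\<Sum>i = 0..<n div 2. real (card (WHomPP i (k div 2) m n k)))
         + (1 / 4) * (1 - (-1) ^ n) * (1 - (-1) ^ k) * real (card (WHomPP (n div 2) (k div 2) m n k))"
    unfolding w_def .
next
  obtain M where mM: "m = Suc M" using assms(1) gr0_implies_Suc by blast
  show "\<forall>i < n. \<forall>j < k. card (WHomPP i j m n k) =
           (\<Sum>h = 0..m - 1. (m - 1 choose h) * card (HomP i (h + 1) n) * card (WHomP j (m - h) k))"
  proof (intro allI impI)
    fix i j assume i: "i < n" and j: "j < k"
    have "card (WHomPP i j m n k) = (\<Sum>h\<le>M. (M choose h) * Hn n h i * Vk k (M - h) j)"
      unfolding mM card_WHomPP using count_main i j by blast
    also have "\<dots> = (\<Sum>h = 0..m - 1. (m - 1 choose h) * card (HomP i (h + 1) n) * card (WHomP j (m - h) k))"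
      unfolding mM atLeast0AtMost
      by (rule sum.cong) (auto simp: Hn_def Vk_def HomP_walks WHomP_walks Suc_diff_le)
    finally show "card (WHomPP i j m n k) = (\<Sum>h = 0..m - 1. (m - 1 choose h) * card (HomP i (h + 1) n) * card (WHomP j (m - h) k))" .
  qed
qed

end
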